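(* Let $f\ge 0$, $n=3f+1$, and let nodes $v_0,\dots,v_{n-1}$ be given, of which exactly $f$ are byzantine and the remaining $2f+1$ honest. Let the creator of round $r\in\mathbb{Z}_{\ge 0}$ be $v_{r\bmod n}$. Then among any $n+2$ consecutive rounds there exist three consecutive rounds whose creators are all honest. *)

theory Defs
  imports Main
begin

text \<open>Nodes are identified with indices 0..n-1; the creator of round r is node (r mod n).\<close>
definition creator :: "nat \<Rightarrow> nat \<Rightarrow> nat" where
  "creator n r = r mod n"

end

theory Submission
  imports Defs
begin

lemma dvd_win:
  fixes a b i n s :: nat
  assumes "s \<le> a" "a < b" "b < s + n" "(a + i) mod n = (b + i) mod n"
  shows False
proof -
  have "a + i \<le> b + i" using assms(2) by simp
  then have "n dvd (b + i) - (a + i)" using mod_eq_dvd_iff_nat[OF \<open>a + i \<le> b + i\<close>, of n] assms(4) by argo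
  then have d: "n dvd b - a" by simp
  have "0 < b - a" "b - a < n" using assms(1-3) by linarith+
  then show False using d nat_dvd_not_less by blast
qed
lemma inj_window:
  fixes n s i r1 r2 :: nat
  assumes "s \<le> r1" "r1 < s + n" "s \<le> r2" "r2 < s + n"
    and "(r1 + i) mod n = (r2 + i) mod n"
  shows "r1 = r2"
proof (rule linorder_cases[of r1 r2])
  assume "r1 < r2" then show ?thesis using dvd_win[of s r1 r2 n i] assms by blast
next
  assume "r2 < r1" then show ?thesis using dvd_win[of s r2 r1 n i] assms by metis
qed
lemma card_le1:
  fixes n s i b :: nat
  assumes "n > 0"
  shows "card {r \<in> {s..<s+n}. (r + i) mod n = b} \<le> 1"
proof -
  let ?A = "{r \<in> {s..<s+n}. (r + i) mod n = b}"
  have all: "\<forall>x\<in>?A. \<forall>y\<in>?A. x = y"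
  proof (intro ballI)
    fix x y assume "x \<in> ?A" "y \<in> ?A"
    then show "x = y" using inj_window[of s x n y i] by auto
  qed
  have fin: "finite ?A" by simp
  have "card ?A \<le> Suc 0" using card_le_Suc0_iff_eq[OF fin] all by blast
  then show ?thesis by simp
qed

theorem lemma12:
  fixes f n :: nat and Byz :: "nat set" and s :: nat
  assumes "n = 3 * f + 1"
    and "Byz \<subseteq> {0..<n}"
    and "card Byz = f"
  shows "\<exists>r. s \<le> r \<and> r + 2 \<le> s + (n + 2) - 1 \<and>
           (\<forall>i\<le>2. creator n (r + i) \<notin> Byz)"
proof -
  have n0: "n > 0" using assms(1) by simp
  have finB: "finite Byz" using assms(2) finite_subset by blast
  let ?W = "{s..<s+n}"
  let ?T = "{r \<in> ?W. \<exists>i\<le>2. (r + i) mod n \<in> Byz}"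
  let ?U = "\<Union>p\<in>Byz \<times> {..2::nat}. {r \<in> ?W. (r + snd p) mod n = fst p}"
  have sub: "?T \<subseteq> ?U" by force
  have "card ?U \<le> (\<Sum>p\<in>Byz \<times> {..2::nat}. card {r \<in> ?W. (r + snd p) mod n = fst p})"
    by (rule card_UN_le) (simp add: finB)
  also have "\<dots> \<le> (\<Sum>p\<in>Byz \<times> {..2::nat}. 1)"
    apply (rule sum_mono) using card_le1[OF n0] by blast
  also have "\<dots> = 3 * f" using assms(3) finB by (simp add: card_cartesian_product)
  finally have cU: "card ?U \<le> 3 * f" .
  have "finite ?U" by (rule finite_subset[of _ ?W]) auto
  then have "card ?T \<le> card ?U" by (rule card_mono[OF _ sub])
  then have c1: "card ?T \<le> 3 * f" using cU by (rule le_trans)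
  have cW: "card ?W = n" by simp
  have c2: "3 * f < n" using assms(1) by simp
  have "card ?T < n" using c1 c2 by (rule le_less_trans)
  then have lt: "card ?T < card ?W" unfolding cW .
  have "\<not> ?W \<subseteq> ?T" 
  proof
    assume ws: "?W \<subseteq> ?T"
    have tw: "?T \<subseteq> ?W" by (rule subsetI) (erule CollectE, erule conjE)
    have ft: "finite ?T" using finite_atLeastLessThan tw by (rule finite_subset[rotated])
    have "card ?W \<le> card ?T" using ft ws by (rule card_mono)
    then show False using leD lt by blast
  qed
  then obtain r where r: "r \<in> ?W" "r \<notin> ?T" by blast
  have h1: "\<forall>i\<le>2. creator n (r + i) \<notin> Byz"
    using r(2) r(1) unfolding creator_def by blast
  have h2: "s \<le> r" "r + 2 \<le> s + (n + 2) - 1" using r(1) by auto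
  show ?thesis using h1 h2 by blast
qed

end
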